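(* Let $S=S^\top\in\mathbb{R}^{p\times p}$ with $S>0$, let $V\in\mathbb{R}^{p\times r}$ be a full rank matrix with $r\le p$, and let $Q_V=Q_V^\top\in\mathbb{R}^{r\times r}$ satisfy $0\le Q_V\le V^\top SV$. Then there exists $Q=Q^\top\in\mathbb{R}^{p\times p}$ such that $0\le Q\le S$ and $V^\top QV=Q_V$. *)

theory Defs
  imports "HOL-Analysis.Analysis"
begin

definition symmetric_mat :: "real^'n^'n \<Rightarrow> bool" where
  "symmetric_mat A \<longleftrightarrow> transpose A = A"

definition pos_semidef :: "real^'n^'n \<Rightarrow> bool" where
  "pos_semidef A \<longleftrightarrow> symmetric_mat A \<and> (\<forall>x. 0 \<le> x \<bullet> (A *v x))"

definition pos_def :: "real^'n^'n \<Rightarrow> bool" where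
  "pos_def A \<longleftrightarrow> symmetric_mat A \<and> (\<forall>x. x \<noteq> 0 \<longrightarrow> 0 < x \<bullet> (A *v x))"

definition loewner_le :: "real^'n^'n \<Rightarrow> real^'n^'n \<Rightarrow> bool" where
  "loewner_le A B \<longleftrightarrow> pos_semidef (B - A)"

end

theory Submission
  imports Defs
begin

lemma inner_tr: "(x::real^'m) \<bullet> ((A::real^'n^'m) *v y) = (transpose A *v x) \<bullet> y"
  by (simp add: dot_lmul_matrix)

theorem lemmaA3:
  fixes S :: "real^'p^'p" and V :: "real^'r^'p" and QV :: "real^'r^'r"
  assumes "symmetric_mat S" and "pos_def S"
    and "rank V = CARD('r)" and "CARD('r) \<le> CARD('p)"
    and "symmetric_mat QV"
    and "pos_semidef QV"
    and "loewner_le QV (transpose V ** S ** V)"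
  shows "\<exists>Q :: real^'p^'p. symmetric_mat Q \<and> pos_semidef Q \<and> loewner_le Q S
           \<and> transpose V ** Q ** V = QV"
proof -
  define M where "M = transpose V ** S ** V"
  have St: "transpose S = S" using assms(1) by (simp add: symmetric_mat_def)
  have QVt: "transpose QV = QV" using assms(5) by (simp add: symmetric_mat_def)
  have Mt: "transpose M = M" unfolding M_def
    by (simp add: matrix_transpose_mul St matrix_mul_assoc)
  have Spos: "\<And>x. x \<noteq> 0 \<Longrightarrow> 0 < x \<bullet> (S *v x)" using assms(2) by (simp add: pos_def_def)
  have injV: "inj ((*v) V)" using assms(3) full_rank_injective by blast
  have quadM: "\<And>y. y \<bullet> (M *v y) = (V *v y) \<bullet> (S *v (V *v y))"
    unfolding M_def by (metis inner_tr transpose_transpose matrix_vector_mul_assoc)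
  have M0: "M *v y = 0 \<Longrightarrow> y = 0" for y
  proof -
    assume "M *v y = 0"
    then have "(V *v y) \<bullet> (S *v (V *v y)) = 0" using quadM[of y] by simp
    then have "V *v y = 0" using Spos by force
    then show "y = 0" using injV by (metis injD matrix_vector_mult_0_right)
  qed
  have "inj ((*v) M)"
  proof (rule injI)
    fix a b assume "M *v a = M *v b"
    then have "M *v (a - b) = 0" by (simp add: matrix_vector_mult_diff_distrib)
    then show "a = b" using M0[of "a - b"] by simp
  qed
  then obtain Mi where Mi1: "Mi ** M = mat 1" using matrix_left_invertible_injective by blast
  then have Mi2: "M ** Mi = mat 1" using matrix_left_right_inverse by blast
  have "transpose Mi ** M = mat 1"
    using arg_cong[OF Mi2, of transpose] by (simp add: matrix_transpose_mul Mt)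
  then have Mit: "transpose Mi = Mi"
    by (metis Mi2 matrix_mul_assoc matrix_mul_lid matrix_mul_rid)
  define W where "W = S ** V ** Mi"
  define Q where "Q = W ** QV ** transpose W"
  have Wt: "transpose W = Mi ** transpose V ** S"
    unfolding W_def by (simp add: matrix_transpose_mul St Mit matrix_mul_assoc)
  have Qt: "transpose Q = Q"
    unfolding Q_def by (simp add: matrix_transpose_mul QVt matrix_mul_assoc)
  have quadQ: "x \<bullet> (Q *v x) = (transpose W *v x) \<bullet> (QV *v (transpose W *v x))" for x
    unfolding Q_def by (metis inner_tr transpose_transpose matrix_vector_mul_assoc)
  have VQV: "transpose V ** Q ** V = QV"
  proof -
    have "transpose V ** Q ** V = M ** Mi ** QV ** (Mi ** M)"
      unfolding Q_def Wt unfolding W_def M_def by (simp add: matrix_mul_assoc)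
    then show ?thesis by (simp add: Mi1 Mi2)
  qed
  have psdQ: "pos_semidef Q"
    unfolding pos_semidef_def symmetric_mat_def
    using Qt quadQ assms(6) by (simp add: pos_semidef_def)
  have leQ: "x \<bullet> (Q *v x) \<le> x \<bullet> (S *v x)" for x
  proof -
    define y where "y = transpose W *v x"
    define z where "z = V *v y"
    have L: "\<And>u. 0 \<le> u \<bullet> ((M - QV) *v u)" using assms(7) unfolding M_def[symmetric]
      by (simp add: loewner_le_def pos_semidef_def)
    have "y \<bullet> (QV *v y) \<le> y \<bullet> (M *v y)" using L[of y]
      by (simp add: matrix_vector_mult_diff_rdistrib inner_diff_right)
    also have "\<dots> = z \<bullet> (S *v z)" using quadM z_def by simp
    finally have 1: "x \<bullet> (Q *v x) \<le> z \<bullet> (S *v z)" using quadQ y_def by simp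
    have "M *v y = transpose V *v (S *v x)"
      unfolding y_def Wt by (simp add: matrix_vector_mul_assoc Mi2 matrix_mul_assoc)
    have "y \<bullet> (transpose V *v (S *v x)) = (transpose (transpose V) *v y) \<bullet> (S *v x)"
      by (rule inner_tr)
    then have 2: "z \<bullet> (S *v z) = z \<bullet> (S *v x)"
      using quadM[of y] \<open>M *v y = transpose V *v (S *v x)\<close> unfolding z_def transpose_transpose
      by simp
    have "x \<bullet> (S *v z) = (transpose S *v x) \<bullet> z"
      by (rule inner_tr)
    then have sym: "x \<bullet> (S *v z) = z \<bullet> (S *v x)"
      unfolding St by (simp add: inner_commute)
    have "0 \<le> (x - z) \<bullet> (S *v (x - z))"
      using Spos[of "x - z"] by (cases "x - z = 0") auto
    also have "\<dots> = x \<bullet> (S *v x) - x \<bullet> (S *v z) - z \<bullet> (S *v x) + z \<bullet> (S *v z)"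
      by (simp add: matrix_vector_mult_diff_distrib inner_diff_left inner_diff_right)
    finally show ?thesis using 1 2 sym by linarith
  qed
  have "transpose (S - Q) = transpose S - transpose Q"
    by (simp add: transpose_def vec_eq_iff)
  then have "transpose (S - Q) = S - Q" using St Qt by simp
  have "loewner_le Q S"
    unfolding loewner_le_def pos_semidef_def symmetric_mat_def
    using leQ \<open>transpose (S - Q) = S - Q\<close> by (simp add: matrix_vector_mult_diff_rdistrib inner_diff_right)
  then show ?thesis using Qt psdQ VQV by (auto simp: symmetric_mat_def)
qed

end
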